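(* Assume $E_{l,m}$ is toric, i.e. $q-p$ divides $m$. Then the morphism $\psi=\gamma\times\eta_{-p,-1}\times\eta_{q,1}:\mathcal H\to E_{l,m}\times\mathbb P^1\times\mathbb P^1$ is bijective onto its image.
   Context: Let $l=p/q \in \mathbb Q \cap (0,1]$ with $\gcd(p,q)=1$ and $m \in \mathbb N$. Let $H_{q-p}=\{X_0^{q-p}=X_1X_4-X_2X_3\} \subset \mathbb C^5$, where $\mathbb C^5=V(0)\oplus V(1)\oplus V(1)$ with coordinates $X_0,\dots,X_4$ and $SL(2)$ acts by left multiplication on the matrix $\begin{pmatrix} X_1 & X_3\\ X_2 & X_4\end{pmatrix}$. Let $G_0=\{\mathrm{diag}(t,t^{-p},t^{-p},t^q,t^q): t\in\mathbb C^*\}$ and $G_m=\{\mathrm{diag}(1,\zeta^{-1},\zeta^{-1},\zeta,\zeta): \zeta^m=1\}$. Let $E_{l,m}=H_{q-p}/\!\!/(G_0\times G_m)$. Identify $\mathrm{Irr}(G_0\times G_m)$ with $\mathbb Z\times\mathbb Z/m\mathbb Z$ and let $h(n,d)=1$ for all $(n,d)$ (the Hilbert function of the general fibers of the quotient morphism). Let $\mathcal H=\mathrm{Hilb}^{G_0\times G_m}_h(H_{q-p})$ be the invariant Hilbert scheme and $\gamma:\mathcal H\to E_{l,m}$ the Hilbert–Chow morphism. The weight space of weight $(-p,-1)$ of $\mathbb C[H_{q-p}]$ is generated over the invariants by $F_{-p,-1}=\langle X_1,X_2\rangle$, and that of weight $(q,1)$ by $F_{q,1}=\langle X_3,X_4\rangle$.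 For $[Z]\in\mathcal H$ with ideal $I_Z$, $\eta_{-p,-1}([Z])\in\mathrm{Gr}(1,F_{-p,-1}^{\vee})\cong\mathbb P^1$ is the one-dimensional quotient $F_{-p,-1}/\mathrm{Ker}$, where $\mathrm{Ker}$ is the kernel of the natural map $F_{-p,-1}\to$ (weight $(-p,-1)$ part of $\mathbb C[Z]$), i.e. the line of linear forms $s_1X_1+s_2X_2$ lying in $I_Z$; the isomorphism with $\mathbb P^1$ is $\langle t_0X_1^\vee+t_1X_2^\vee\rangle\mapsto[t_0:t_1]$. Similarly $\eta_{q,1}:\mathcal H\to\mathrm{Gr}(1,F_{q,1}^{\vee})\cong\mathbb P^1$ using $X_3,X_4$. These are $SL(2)$-equivariant. *)

theory Defs
  imports "HOL-Analysis.Analysis" "HOL-Library.Poly_Mapping" "HOL-Library.Numeral_Type"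
begin

text \<open>Polynomial ring C[X_0,...,X_4]: exponent vectors indexed by the 5-element type 5.\<close>
type_synonym mono5 = "5 \<Rightarrow>\<^sub>0 nat"
type_synonym poly5 = "mono5 \<Rightarrow>\<^sub>0 complex"

definition Var :: "5 \<Rightarrow> poly5" where
  "Var i = Poly_Mapping.single (Poly_Mapping.single i 1) 1"

definition const5 :: "complex \<Rightarrow> poly5" where
  "const5 c = Poly_Mapping.single 0 c"

definition hyp_eq :: "nat \<Rightarrow> nat \<Rightarrow> poly5" where
  "hyp_eq p q = Var 0 ^ (q - p) - (Var 1 * Var 4 - Var 2 * Var 3)"

text \<open>Weight of a monomial for G_0 x G_m, identified with Z x Z/mZ
  (second component represented by its residue in {0..<m}).
  X_0 has weight (1,0), X_1,X_2 weight (-p,-1), X_3,X_4 weight (q,1).\<close>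
definition wt :: "nat \<Rightarrow> nat \<Rightarrow> nat \<Rightarrow> mono5 \<Rightarrow> int \<times> int" where
  "wt p q m a =
     (int (Poly_Mapping.lookup a (0::5)) - int p * int (Poly_Mapping.lookup a (1::5) + Poly_Mapping.lookup a (2::5)) + int q * int (Poly_Mapping.lookup a (3::5) + Poly_Mapping.lookup a (4::5)),
      (int (Poly_Mapping.lookup a (3::5) + Poly_Mapping.lookup a (4::5)) - int (Poly_Mapping.lookup a (1::5) + Poly_Mapping.lookup a (2::5))) mod int m)"

definition weights :: "nat \<Rightarrow> (int \<times> int) set" where
  "weights m = {(n, d). 0 \<le> d \<and> d < int m}"

definition weight_comp :: "nat \<Rightarrow> nat \<Rightarrow> nat \<Rightarrow> int \<times> int \<Rightarrow> poly5 \<Rightarrow> poly5" where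
  "weight_comp p q m w g = Poly_Mapping.mapp (\<lambda>a c. if wt p q m a = w then c else 0) g"

definition weight_space :: "nat \<Rightarrow> nat \<Rightarrow> nat \<Rightarrow> int \<times> int \<Rightarrow> poly5 set" where
  "weight_space p q m w = {g. \<forall>a \<in> Poly_Mapping.keys g. wt p q m a = w}"

definition is_ideal5 :: "poly5 set \<Rightarrow> bool" where
  "is_ideal5 J \<longleftrightarrow> 0 \<in> J \<and> (\<forall>x\<in>J. \<forall>y\<in>J. x + y \<in> J) \<and> (\<forall>r. \<forall>x\<in>J. r * x \<in> J)"

text \<open>Closed points of the invariant Hilbert scheme Hilb^{G_0 x G_m}_h(H_{q-p}), h = 1:
  ideals J of C[X_0..X_4] containing the equation of H_{q-p} (i.e. ideals of C[H_{q-p}]),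
  stable under G_0 x G_m (= homogeneous for the Z x Z/mZ grading), such that every weight
  space of C[Z] = C[X]/J is one-dimensional.\<close>
definition hilb_point :: "nat \<Rightarrow> nat \<Rightarrow> nat \<Rightarrow> poly5 set \<Rightarrow> bool" where
  "hilb_point p q m J \<longleftrightarrow>
     is_ideal5 J \<and> hyp_eq p q \<in> J \<and>
     (\<forall>g\<in>J. \<forall>w. weight_comp p q m w g \<in> J) \<and>
     (\<forall>w\<in>weights m. \<exists>v\<in>weight_space p q m w. v \<notin> J \<and>
         (\<forall>u\<in>weight_space p q m w. \<exists>c. u - const5 c * v \<in> J))"

text \<open>Hilbert-Chow morphism: gamma([Z]) is the point of E_{l,m} = Spec C[H]^G given by the
  maximal ideal J \<inter> (invariants).\<close>
definition gamma :: "nat \<Rightarrow> nat \<Rightarrow> nat \<Rightarrow> poly5 set \<Rightarrow> poly5 set" where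
  "gamma p q m J = J \<inter> weight_space p q m (0, 0)"

text \<open>eta_{-p,-1}([Z]) as the line in F^\<or> = C^2 (coordinates t0, t1 w.r.t. X_1^\<or>, X_2^\<or>)
  annihilating the kernel {s1 X_1 + s2 X_2 \<in> J}; similarly eta_{q,1} with X_3, X_4.\<close>
definition eta_neg :: "poly5 set \<Rightarrow> (complex \<times> complex) set" where
  "eta_neg J = {(t0, t1). \<forall>s1 s2. const5 s1 * Var 1 + const5 s2 * Var 2 \<in> J \<longrightarrow> t0 * s1 + t1 * s2 = 0}"

definition eta_pos :: "poly5 set \<Rightarrow> (complex \<times> complex) set" where
  "eta_pos J = {(t0, t1). \<forall>s1 s2. const5 s1 * Var 3 + const5 s2 * Var 4 \<in> J \<longrightarrow> t0 * s1 + t1 * s2 = 0}"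

end

theory Submission imports Defs begin

lemma five: "(x::5) = 0 \<or> x = 1 \<or> x = 2 \<or> x = 3 \<or> x = 4"
proof (induct x rule: bit1.induct)
  case (1 z)
  then have "z = 0 \<or> z = 1 \<or> z = 2 \<or> z = 3 \<or> z = 4" by auto
  then show ?case by auto
qed

section \<open>Ideals and congruences\<close>

definition cg :: "poly5 set \<Rightarrow> poly5 \<Rightarrow> poly5 \<Rightarrow> bool" where
  "cg K f g \<longleftrightarrow> f - g \<in> K"

lemma id_zero: "is_ideal5 K \<Longrightarrow> 0 \<in> K" by (simp add: is_ideal5_def)
lemma id_add: "is_ideal5 K \<Longrightarrow> x \<in> K \<Longrightarrow> y \<in> K \<Longrightarrow> x + y \<in> K" by (simp add: is_ideal5_def)
lemma id_mult: "is_ideal5 K \<Longrightarrow> x \<in> K \<Longrightarrow> r * x \<in> K" by (simp add: is_ideal5_def)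
lemma id_mult2: "is_ideal5 K \<Longrightarrow> x \<in> K \<Longrightarrow> x * r \<in> K" by (metis id_mult mult.commute)
lemma id_neg: "is_ideal5 K \<Longrightarrow> x \<in> K \<Longrightarrow> - x \<in> K"
  using id_mult[of K x "-1"] by simp
lemma id_diff: "is_ideal5 K \<Longrightarrow> x \<in> K \<Longrightarrow> y \<in> K \<Longrightarrow> x - y \<in> K"
  using id_add[of K x "-y"] id_neg[of K y] by simp
lemma id_sum: "is_ideal5 K \<Longrightarrow> (\<And>x. x \<in> S \<Longrightarrow> f x \<in> K) \<Longrightarrow> sum f S \<in> K"
proof (induct S rule: infinite_finite_induct)
  case (infinite A) then show ?case by (simp add: id_zero)
next
  case empty then show ?case by (simp add: id_zero)
next
  case (insert x F) then show ?case by (simp add: id_add)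
qed

lemma id_inter: "is_ideal5 J1 \<Longrightarrow> is_ideal5 J2 \<Longrightarrow> is_ideal5 (J1 \<inter> J2)"
  by (simp add: is_ideal5_def)

lemma cg_refl: "is_ideal5 K \<Longrightarrow> cg K f f" by (simp add: cg_def id_zero)
lemma cg_sym: "is_ideal5 K \<Longrightarrow> cg K f g \<Longrightarrow> cg K g f"
  unfolding cg_def using id_neg by fastforce
lemma cg_trans: "is_ideal5 K \<Longrightarrow> cg K f g \<Longrightarrow> cg K g h \<Longrightarrow> cg K f h"
  unfolding cg_def using id_add by fastforce
lemma cg_add: "is_ideal5 K \<Longrightarrow> cg K f g \<Longrightarrow> cg K f' g' \<Longrightarrow> cg K (f + f') (g + g')"
  unfolding cg_def using id_add by (fastforce simp: algebra_simps)
lemma cg_mult: "is_ideal5 K \<Longrightarrow> cg K f g \<Longrightarrow> cg K f' g' \<Longrightarrow> cg K (f * f') (g * g')"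
proof -
  assume K: "is_ideal5 K" and a: "cg K f g" and b: "cg K f' g'"
  have "f * f' - g * g' = f * (f' - g') + (f - g) * g'" by (simp add: algebra_simps)
  moreover have "f * (f' - g') \<in> K" using b K id_mult unfolding cg_def by blast
  moreover have "(f - g) * g' \<in> K" using a K id_mult2 unfolding cg_def by blast
  ultimately show ?thesis unfolding cg_def using K id_add by metis
qed
lemma cg_pow: "is_ideal5 K \<Longrightarrow> cg K f g \<Longrightarrow> cg K (f ^ n) (g ^ n)"
  by (induct n) (simp_all add: cg_refl cg_mult)
lemma cg_multL: "is_ideal5 K \<Longrightarrow> cg K f g \<Longrightarrow> cg K (h * f) (h * g)"
  by (simp add: cg_mult cg_refl)
lemma cg_multR: "is_ideal5 K \<Longrightarrow> cg K f g \<Longrightarrow> cg K (f * h) (g * h)"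
  by (simp add: cg_mult cg_refl)
lemma cg_mem: "is_ideal5 K \<Longrightarrow> cg K f g \<Longrightarrow> g \<in> K \<Longrightarrow> f \<in> K"
  unfolding cg_def using id_add by fastforce
lemma cg_sub: "K \<subseteq> K' \<Longrightarrow> cg K f g \<Longrightarrow> cg K' f g"
  unfolding cg_def by auto

lemma const5_mult: "const5 (a * b) = const5 a * const5 b"
  by (simp add: const5_def mult_single)
lemma const5_one[simp]: "const5 1 = 1" by (simp add: const5_def)
lemma const5_zero[simp]: "const5 0 = 0" by (simp add: const5_def)
lemma const5_add: "const5 (a + b) = const5 a + const5 b" by (simp add: const5_def single_add)
lemma const5_diff: "const5 (a - b) = const5 a - const5 b" by (simp add: const5_def single_diff)
lemma const5_uminus: "const5 (- a) = - const5 a" by (simp add: const5_def single_uminus)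
lemma const5_pow: "const5 (a ^ n) = const5 a ^ n"
  by (induct n) (simp_all add: const5_mult)

lemma id_const_inv: "is_ideal5 K \<Longrightarrow> const5 c * x \<in> K \<Longrightarrow> c \<noteq> 0 \<Longrightarrow> x \<in> K"
proof -
  assume K: "is_ideal5 K" and h: "const5 c * x \<in> K" and c: "c \<noteq> 0"
  have "const5 (inverse c) * (const5 c * x) \<in> K" using id_mult[OF K h] .
  also have "const5 (inverse c) * (const5 c * x) = x"
    by (simp add: mult.assoc[symmetric] const5_mult[symmetric] c)
  finally show ?thesis .
qed

lemma cg_scale: "is_ideal5 K \<Longrightarrow> cg K f (const5 c * g) \<Longrightarrow> cg K (const5 d * f) (const5 (d * c) * g)"
  using cg_multL[of K f "const5 c * g" "const5 d"] by (simp add: const5_mult mult.assoc)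

definition mono :: "mono5 \<Rightarrow> poly5" where "mono a = Poly_Mapping.single a 1"

lemma mono_add: "mono (a + b) = mono a * mono b"
  by (simp add: mono_def mult_single)
lemma mono_zero: "mono 0 = 1" by (simp add: mono_def)
lemma Var_pow: "Var i ^ n = mono (Poly_Mapping.single i n)"
proof (induct n)
  case 0 then show ?case by (simp add: mono_zero)
next
  case (Suc n)
  have "Var i ^ Suc n = Var i * mono (Poly_Mapping.single i n)" using Suc by simp
  also have "\<dots> = mono (Poly_Mapping.single i 1 + Poly_Mapping.single i n)"
    by (simp add: Var_def mono_def mult_single)
  also have "Poly_Mapping.single i 1 + Poly_Mapping.single i n = Poly_Mapping.single i (Suc n)"
    by (simp add: single_add[symmetric])
  finally show ?case .
qed

lemma mono_decomp_exp: "(a::mono5) = Poly_Mapping.single 0 (Poly_Mapping.lookup a 0) + Poly_Mapping.single 1 (Poly_Mapping.lookup a 1)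
  + Poly_Mapping.single 2 (Poly_Mapping.lookup a 2) + Poly_Mapping.single 3 (Poly_Mapping.lookup a 3)
  + Poly_Mapping.single 4 (Poly_Mapping.lookup a 4)"
proof (rule poly_mapping_eqI)
  fix x :: 5
  show "Poly_Mapping.lookup a x = Poly_Mapping.lookup (Poly_Mapping.single 0 (Poly_Mapping.lookup a 0) + Poly_Mapping.single 1 (Poly_Mapping.lookup a 1)
  + Poly_Mapping.single 2 (Poly_Mapping.lookup a 2) + Poly_Mapping.single 3 (Poly_Mapping.lookup a 3)
  + Poly_Mapping.single 4 (Poly_Mapping.lookup a 4)) x"
    using five[of x] by (auto simp: lookup_add lookup_single)
qed

lemma mono_decomp: "mono a = Var 0 ^ Poly_Mapping.lookup a 0 * Var 1 ^ Poly_Mapping.lookup a 1 *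
   Var 2 ^ Poly_Mapping.lookup a 2 * Var 3 ^ Poly_Mapping.lookup a 3 * Var 4 ^ Poly_Mapping.lookup a 4"
  apply (subst mono_decomp_exp)
  apply (simp only: mono_add Var_pow)
  done

lemma single_eq_const_mono: "Poly_Mapping.single a c = const5 c * mono a"
  by (simp add: const5_def mono_def mult_single)

lemma poly_sum: "(g::poly5) = (\<Sum>a\<in>Poly_Mapping.keys g. const5 (Poly_Mapping.lookup g a) * mono a)"
proof (rule poly_mapping_eqI)
  fix x
  have "Poly_Mapping.lookup (\<Sum>a\<in>Poly_Mapping.keys g. const5 (Poly_Mapping.lookup g a) * mono a) x
     = (\<Sum>a\<in>Poly_Mapping.keys g. (Poly_Mapping.lookup g a when a = x))"
    by (simp add: lookup_sum single_eq_const_mono[symmetric] lookup_single)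
  also have "\<dots> = Poly_Mapping.lookup g x"
    by (cases "x \<in> Poly_Mapping.keys g") (auto simp: when_def in_keys_iff)
  finally show "Poly_Mapping.lookup g x = Poly_Mapping.lookup (\<Sum>a\<in>Poly_Mapping.keys g. const5 (Poly_Mapping.lookup g a) * mono a) x" by simp
qed

section \<open>Comparability\<close>

lemma cg_inv: "is_ideal5 K \<Longrightarrow> cg K M (const5 c * N) \<Longrightarrow> c \<noteq> 0 \<Longrightarrow> cg K N (const5 (inverse c) * M)"
proof -
  assume K: "is_ideal5 K" and h: "cg K M (const5 c * N)" and c: "c \<noteq> 0"
  have "cg K (const5 (inverse c) * M) (const5 (inverse c * c) * N)" using cg_scale[OF K h] .
  then show ?thesis using c cg_sym[OF K] by simp
qed

lemma cg_chain: "is_ideal5 K \<Longrightarrow> cg K A (const5 c * B) \<Longrightarrow> cg K B (const5 d * C) \<Longrightarrow> cg K A (const5 (c * d) * C)"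
  by (meson cg_scale cg_trans)

lemma nat_shift: assumes "int x - int y = int c * j" "0 \<le> j" shows "x = y + c * nat j"
proof -
  have "int (y + c * nat j) = int x" using assms by simp
  then show ?thesis by (metis of_nat_eq_iff)
qed

lemma small_dvd_eq: assumes "int k dvd int a - int a'" "a < k" "a' < k" shows "a = a'"
proof (rule ccontr)
  assume "a \<noteq> a'"
  then have "int a - int a' \<noteq> 0" by simp
  then have "\<bar>int k\<bar> \<le> \<bar>int a - int a'\<bar>" using assms(1) by (rule dvd_imp_le_int)
  then show False using assms(2,3) by linarith
qed

locale cmpl =
  fixes K :: "poly5 set" and z u v :: poly5 and de la mu :: complex and p q m k :: nat
  assumes K: "is_ideal5 K"
  and kpos: "0 < k" and qpk: "q = p + k" and kdvd: "k dvd m" and mpos: "0 < m" and cop: "coprime p q"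
  and rel: "cg K (z^k) (const5 de * (u * v))"
  and relU: "cg K (z^(p*m) * u^m) (const5 la)"
  and relV: "cg K (u^(q*(m div k)) * v^(p*(m div k))) (const5 mu)"
begin

definition M where "M a s t = z^a * u^s * v^t"
definition Wt where "Wt a s t = (int a - int p * int s + int q * int t, (int t - int s) mod int m)"
definition cmp where "cmp x y \<longleftrightarrow> (\<exists>c. cg K x (const5 c * y)) \<or> (\<exists>c. cg K y (const5 c * x))"

lemma cmp_sym: "cmp x y \<Longrightarrow> cmp y x" unfolding cmp_def by blast

lemma cmp_zero: "cg K x 0 \<Longrightarrow> cmp x y"
  unfolding cmp_def by (rule disjI1, rule exI[of _ 0], simp)

lemma U_pow: "cg K ((z^(p*m) * u^m)^j) (const5 (la^j))"
  using cg_pow[OF K relU] by (simp add: const5_pow)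

lemma V_pow: "cg K ((u^(q*(m div k)) * v^(p*(m div k)))^j) (const5 (mu^j))"
  using cg_pow[OF K relV] by (simp add: const5_pow)

lemma cg_times_const: "cg K A (const5 c) \<Longrightarrow> cg K (B * A) (const5 c * B)"
  using cg_multL[OF K, of A "const5 c" B] by (simp add: mult.commute)

lemma d0_kill: "de = 0 \<Longrightarrow> k \<le> a \<Longrightarrow> cg K (M a s t) 0"
proof -
  assume d: "de = 0" and ka: "k \<le> a"
  have e: "M a s t = (z^(a-k) * u^s * v^t) * z^k"
    using ka by (simp add: M_def power_add[symmetric] mult_ac)
  have "cg K ((z^(a-k) * u^s * v^t) * z^k) ((z^(a-k) * u^s * v^t) * 0)"
    using cg_multL[OF K, of "z^k" 0] rel d by simp
  then show ?thesis using e by simp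
qed

lemma stepV: "s' = s + q*(m div k)*j \<Longrightarrow> t' = t + p*(m div k)*j \<Longrightarrow> cg K (M a s' t') (const5 (mu^j) * M a s t)"
proof -
  assume h: "s' = s + q*(m div k)*j" "t' = t + p*(m div k)*j"
  have "M a s' t' = M a s t * (u^(q*(m div k)) * v^(p*(m div k)))^j"
    using h by (simp add: M_def power_add power_mult_distrib power_mult[symmetric] mult_ac)
  then show ?thesis using cg_times_const[OF V_pow] by simp
qed

lemma uv_rel: "de \<noteq> 0 \<Longrightarrow> cg K (u * v) (const5 (inverse de) * z^k)"
proof -
  assume d: "de \<noteq> 0"
  have "cg K (const5 (inverse de) * z^k) (const5 (inverse de * de) * (u * v))"
    using cg_scale[OF K rel] .
  then show ?thesis using d cg_sym[OF K] by simp
qed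

lemma cpow: "(const5 c * x)^r = const5 (c^r) * x^r"
  by (simp add: power_mult_distrib const5_pow)

lemma uv_pow: "de \<noteq> 0 \<Longrightarrow> cg K ((u * v)^r) (const5 (inverse de ^ r) * z^(k*r))"
  using cg_pow[OF K uv_rel, of r] by (simp add: cpow power_mult)

lemma zk_pow: "cg K ((z^k)^r) (const5 (de ^ r) * (u * v)^r)"
  using cg_pow[OF K rel, of r] by (simp add: cpow)

lemma nf: assumes d: "de \<noteq> 0"
  shows "\<exists>c a0 s0 t0. c \<noteq> 0 \<and> cg K (M a s t) (const5 c * M a0 s0 t0) \<and> (s0 = 0 \<or> t0 = 0) \<and> Wt a0 s0 t0 = Wt a s t"
proof (cases "t \<le> s")
  case True
  then obtain e where e: "s = t + e" using le_Suc_ex by blast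
  have eq: "M a s t = (z^a * u^e) * (u * v)^t" by (simp add: M_def e power_add power_mult_distrib mult_ac)
  have "cg K ((z^a * u^e) * (u * v)^t) ((z^a * u^e) * (const5 (inverse de ^ t) * z^(k*t)))"
    using cg_multL[OF K uv_pow[OF d]] .
  moreover have "(z^a * u^e) * (const5 (inverse de ^ t) * z^(k*t)) = const5 (inverse de ^ t) * M (a + k*t) e 0"
    by (simp add: M_def power_add mult_ac)
  moreover have "Wt (a + k*t) e 0 = Wt a s t" unfolding Wt_def using e qpk by (simp add: algebra_simps)
  ultimately show ?thesis using eq d by (metis nonzero_imp_inverse_nonzero power_not_zero)
next
  case False
  then obtain e where e: "t = s + e" using le_Suc_ex nat_le_linear by blast
  have eq: "M a s t = (z^a * v^e) * (u * v)^s" by (simp add: M_def e power_add power_mult_distrib mult_ac)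
  have "cg K ((z^a * v^e) * (u * v)^s) ((z^a * v^e) * (const5 (inverse de ^ s) * z^(k* s)))"
    using cg_multL[OF K uv_pow[OF d]] .
  moreover have "(z^a * v^e) * (const5 (inverse de ^ s) * z^(k* s)) = const5 (inverse de ^ s) * M (a + k* s) 0 e"
    by (simp add: M_def power_add mult_ac)
  moreover have "Wt (a + k* s) 0 e = Wt a s t" unfolding Wt_def using e qpk by (simp add: algebra_simps)
  ultimately show ?thesis using eq d by (metis nonzero_imp_inverse_nonzero power_not_zero)
qed

lemma nf_uu: assumes w: "Wt a s 0 = Wt a' s' 0" and le: "s \<le> s'"
  shows "\<exists>c. cg K (M a' s' 0) (const5 c * M a s 0)"
proof -
  have w1: "int a - int p * int s = int a' - int p * int s'" and w2: "(- int s) mod int m = (- int s') mod int m"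
    using w by (auto simp: Wt_def)
  have "int m dvd (- int s) - (- int s')" using w2 by (metis mod_eq_dvd_iff)
  then obtain j where j: "int s' - int s = int m * j" by (auto elim: dvdE)
  have j0: "0 \<le> j" using j le mpos by (smt (verit) mult_pos_neg of_nat_0_less_iff of_nat_mono)
  have s': "s' = s + m * nat j" using nat_shift[OF j j0] .
  have "int a' - int a = int (p*m) * j" using w1 j by (simp add: algebra_simps)
  then have a': "a' = a + (p*m) * nat j" using nat_shift j0 by blast
  have "M a' s' 0 = M a s 0 * (z^(p*m) * u^m)^nat j"
    by (simp add: M_def a' s' power_add power_mult_distrib power_mult mult_ac)
  then show ?thesis using cg_times_const[OF U_pow] by auto
qed

lemma zq: "cg K (z^(q*m)) (const5 (de^m * la) * v^m)"
proof -
  have qm: "q*m = p*m + k*m" by (simp add: qpk add_mult_distrib)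
  have e: "z^(q*m) = z^(p*m) * (z^k)^m" unfolding qm power_add power_mult by simp
  have 1: "cg K (z^(q*m)) (z^(p*m) * (const5 (de ^ m) * (u * v)^m))"
    unfolding e using cg_multL[OF K zk_pow] .
  have e2: "z^(p*m) * (const5 (de ^ m) * (u * v)^m) = (v^m * const5 (de^m)) * (z^(p*m) * u^m)"
    by (simp add: power_mult_distrib mult_ac)
  have 2: "cg K ((v^m * const5 (de^m)) * (z^(p*m) * u^m)) ((v^m * const5 (de^m)) * const5 la)"
    using cg_multL[OF K relU] .
  have e3: "(v^m * const5 (de^m)) * const5 la = const5 (de^m * la) * v^m"
    by (simp add: const5_mult mult_ac)
  show ?thesis using cg_trans[OF K 1 2[folded e2]] unfolding e3 .
qed

lemma nf_vv: assumes w: "Wt a 0 t = Wt a' 0 t'" and le: "t \<le> t'"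
  shows "\<exists>c. cg K (M a 0 t) (const5 c * M a' 0 t')"
proof -
  have w1: "int a + int q * int t = int a' + int q * int t'" and w2: "int t mod int m = int t' mod int m"
    using w by (auto simp: Wt_def)
  have "int m dvd int t' - int t" using w2 by (metis mod_eq_dvd_iff)
  then obtain j where j: "int t' - int t = int m * j" by (auto elim: dvdE)
  have j0: "0 \<le> j" using j le mpos by (smt (verit) mult_pos_neg of_nat_0_less_iff of_nat_mono)
  have t': "t' = t + m * nat j" using nat_shift[OF j j0] .
  have "int a - int a' = int (q*m) * j" using w1 j by (simp add: algebra_simps)
  then have a: "a = a' + (q*m) * nat j" using nat_shift j0 by blast
  have eq: "M a 0 t = (z^a' * v^t) * (z^(q*m))^nat j"
    by (simp add: M_def a power_add power_mult mult_ac)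
  have "cg K ((z^a' * v^t) * (z^(q*m))^nat j) ((z^a' * v^t) * (const5 ((de^m * la)^nat j) * (v^m)^nat j))"
    using cg_multL[OF K cg_pow[OF K zq]] by (simp add: cpow)
  moreover have "(z^a' * v^t) * (const5 ((de^m * la)^nat j) * (v^m)^nat j) = const5 ((de^m * la)^nat j) * M a' 0 t'"
    by (simp add: M_def t' power_add power_mult mult_ac)
  ultimately show ?thesis using eq by auto
qed

lemma nf_uv: assumes w: "Wt a s 0 = Wt a' 0 t'"
  shows "\<exists>c. cg K (M a s 0) (const5 c * M a' 0 t')"
proof -
  have w1: "int a - int p * int s = int a' + int q * int t'" and w2: "(- int s) mod int m = int t' mod int m"
    using w by (auto simp: Wt_def)
  have "int m dvd (- int s) - int t'" using w2 by (metis mod_eq_dvd_iff)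
  then have "int m dvd int (s + t')" by (metis dvd_minus_iff minus_diff_eq diff_minus_eq_add add.commute of_nat_add)
  then have "m dvd s + t'" by (metis of_nat_dvd_iff)
  then obtain j where j: "s + t' = m * j" by (auto elim: dvdE)
  have "int a = int a' + int k * int t' + int p * int (s + t')" using w1 qpk by (simp add: algebra_simps)
  then have a: "a = a' + k * t' + p * m * j" using j by (simp add: algebra_simps) (metis of_nat_add of_nat_eq_iff of_nat_mult)
  have eq: "M a s 0 = ((z^a' * z^(p*m*j)) * u^s) * (z^k)^t'"
    by (simp add: M_def a power_add power_mult mult_ac)
  have "cg K (((z^a' * z^(p*m*j)) * u^s) * (z^k)^t') (((z^a' * z^(p*m*j)) * u^s) * (const5 (de ^ t') * (u * v)^t'))"
    using cg_multL[OF K zk_pow] .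
  moreover have "((z^a' * z^(p*m*j)) * u^s) * (const5 (de ^ t') * (u * v)^t') = (const5 (de ^ t') * M a' 0 t') * (z^(p*m) * u^m)^j"
  proof -
    have "u^s * u^t' = (u^m)^j" using j by (simp add: power_add[symmetric] power_mult)
    moreover have "(z^(p*m) * u^m)^j = z^(p*m*j) * (u^m)^j"
      by (simp only: power_mult_distrib power_mult)
    ultimately have h: "(z^(p*m) * u^m)^j = z^(p*m*j) * (u^s * u^t')"
      by simp
    show ?thesis unfolding h by (simp only: M_def power_mult_distrib power_0 mult_1_right mult_1_left mult_ac)
  qed
  moreover have "cg K ((const5 (de ^ t') * M a' 0 t') * (z^(p*m) * u^m)^j) (const5 (la^j) * (const5 (de ^ t') * M a' 0 t'))"
    using cg_times_const[OF U_pow] .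
  ultimately have "cg K (M a s 0) (const5 (la^j) * (const5 (de ^ t') * M a' 0 t'))"
    unfolding eq using cg_trans[OF K] by simp
  then have "cg K (M a s 0) (const5 (la^j * de ^ t') * M a' 0 t')"
    by (simp only: const5_mult mult.assoc)
  then show ?thesis by blast
qed

lemma d0_cmp:
  assumes d: "de = 0" and w: "Wt a s t = Wt a' s' t'"
  shows "cmp (M a s t) (M a' s' t')"
proof (cases "k \<le> a \<or> k \<le> a'")
  case True
  then show ?thesis using d0_kill[OF d] cmp_zero cmp_sym by blast
next
  case False
  have w1: "int a - int p * int s + int q * int t = int a' - int p * int s' + int q * int t'"
    and w2: "(int t - int s) mod int m = (int t' - int s') mod int m"
    using w by (auto simp: Wt_def)
  have md: "int m dvd (int t' - int s') - (int t - int s)"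
    using w2 by (metis mod_eq_dvd_iff)
  have kd: "int k dvd int m" using kdvd by simp
  have "int a - int a' = int p * ((int s - int s') - (int t - int t')) - int k * (int t - int t')"
    using w1 qpk by (simp add: algebra_simps)
  moreover have "int k dvd int p * ((int s - int s') - (int t - int t'))"
  proof -
    have "int m dvd ((int s - int s') - (int t - int t'))"
      using md by (metis (no_types, opaque_lifting) dvd_minus_iff minus_diff_eq diff_diff_eq2 add.commute diff_add_eq diff_diff_eq)
    then show ?thesis using kd by (meson dvd_mult dvd_trans)
  qed
  ultimately have "int k dvd int a - int a'" by (metis dvd_diff dvd_triv_left)
  then have aa: "a = a'" using False
    using small_dvd_eq by (metis not_le)
  define ds where "ds = int s' - int s"
  define dt where "dt = int t' - int t"
  have pq: "int p * ds = int q * dt" using w1 aa unfolding ds_def dt_def by (simp add: algebra_simps)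
  have copi: "coprime (int q) (int p)" using cop by (simp add: coprime_commute)
  have "int q dvd int p * ds" using pq by simp
  then have "int q dvd ds" using copi by (simp add: coprime_dvd_mult_right_iff)
  then obtain r where r: "ds = int q * r" by (auto elim: dvdE)
  have qpos: "int q > 0" using qpk kpos by simp
  have dtr: "dt = int p * r" using pq r qpos by (simp add: algebra_simps)
  define n where "n = m div k"
  have mkn: "m = k * n" using kdvd n_def by simp
  have "int m dvd dt - ds" using md unfolding ds_def dt_def by (simp add: algebra_simps)
  then have "int k * int n dvd - (int k * r)" using mkn dtr r qpk by (simp add: algebra_simps)
  then have "int k * int n dvd int k * r" by simp
  then have "int n dvd r" using kpos by simp
  then obtain j where j: "r = int n * j" by (auto elim: dvdE)
  show ?thesis
  proof (cases "j \<ge> 0")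
    case True
    have "s' = s + q * n * nat j" "t' = t + p * n * nat j"
    proof -
      have "int s' - int s = int (q*n) * j" "int t' - int t = int (p*n) * j"
        using r dtr j unfolding ds_def dt_def by (simp_all add: algebra_simps)
      then show "s' = s + q * n * nat j" "t' = t + p * n * nat j"
        using nat_shift True by blast+
    qed
    then have "cg K (M a s' t') (const5 (mu^nat j) * M a s t)" using stepV n_def by simp
    then show ?thesis unfolding cmp_def using aa by blast
  next
    case False
    have "s = s' + q * n * nat (-j)" "t = t' + p * n * nat (-j)"
    proof -
      have "int s - int s' = int (q*n) * (-j)" "int t - int t' = int (p*n) * (-j)"
        using r dtr j unfolding ds_def dt_def by (simp_all add: algebra_simps)
      then show "s = s' + q * n * nat (-j)" "t = t' + p * n * nat (-j)"
        using nat_shift False by (metis neg_0_le_iff_le not_le order_less_imp_le)+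
    qed
    then have "cg K (M a s t) (const5 (mu^nat (-j)) * M a s' t')" using stepV n_def by simp
    then show ?thesis unfolding cmp_def using aa by blast
  qed
qed

lemma cmp_chain:
  assumes c1: "c1 \<noteq> 0" and c2: "c2 \<noteq> 0" and X: "cg K X (const5 c1 * N1)" and Y: "cg K Y (const5 c2 * N2)"
    and N: "cmp N1 N2"
  shows "cmp X Y"
proof -
  have Y': "cg K N2 (const5 (inverse c2) * Y)" using cg_inv[OF K Y c2] .
  have X': "cg K N1 (const5 (inverse c1) * X)" using cg_inv[OF K X c1] .
  from N show ?thesis unfolding cmp_def
  proof
    assume "\<exists>c. cg K N1 (const5 c * N2)"
    then obtain c where "cg K N1 (const5 c * N2)" by blast
    then have "cg K X (const5 (c1 * c * inverse c2) * Y)"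
      using cg_chain[OF K cg_chain[OF K X] Y'] by simp
    then show "(\<exists>c. cg K X (const5 c * Y)) \<or> (\<exists>c. cg K Y (const5 c * X))" by blast
  next
    assume "\<exists>c. cg K N2 (const5 c * N1)"
    then obtain c where "cg K N2 (const5 c * N1)" by blast
    then have "cg K Y (const5 (c2 * c * inverse c1) * X)"
      using cg_chain[OF K cg_chain[OF K Y] X'] by simp
    then show "(\<exists>c. cg K X (const5 c * Y)) \<or> (\<exists>c. cg K Y (const5 c * X))" by blast
  qed
qed

lemma nf_cmp:
  assumes h: "s = 0 \<or> t = 0" and h': "s' = 0 \<or> t' = 0" and w: "Wt a s t = Wt a' s' t'"
  shows "cmp (M a s t) (M a' s' t')"
proof -
  have A: "t = 0 \<and> t' = 0 \<or> s = 0 \<and> s' = 0 \<or> t = 0 \<and> s' = 0 \<or> s = 0 \<and> t' = 0" using h h' by blast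
  show ?thesis
  proof (rule disjE[OF A])
    assume tt: "t = 0 \<and> t' = 0"
    show ?thesis
    proof (cases "s \<le> s'")
      case True then show ?thesis using nf_uu[of a s a' s'] w tt unfolding cmp_def by auto
    next
      case False then show ?thesis using nf_uu[of a' s' a s] w tt unfolding cmp_def by auto
    qed
  next
    assume "s = 0 \<and> s' = 0 \<or> t = 0 \<and> s' = 0 \<or> s = 0 \<and> t' = 0"
    then show ?thesis
    proof (elim disjE)
      assume ss: "s = 0 \<and> s' = 0"
      show ?thesis
      proof (cases "t \<le> t'")
        case True then show ?thesis using nf_vv[of a t a' t'] w ss unfolding cmp_def by auto
      next
        case False then show ?thesis using nf_vv[of a' t' a t] w ss unfolding cmp_def by auto
      qed
    next
      assume "t = 0 \<and> s' = 0"
      then show ?thesis using nf_uv[of a s a' t'] w unfolding cmp_def by auto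
    next
      assume "s = 0 \<and> t' = 0"
      then show ?thesis using nf_uv[of a' s' a t] w unfolding cmp_def by auto
    qed
  qed
qed

lemma dn_cmp:
  assumes d: "de \<noteq> 0" and w: "Wt a s t = Wt a' s' t'"
  shows "cmp (M a s t) (M a' s' t')"
proof -
  obtain c a0 s0 t0 where 1: "c \<noteq> 0" "cg K (M a s t) (const5 c * M a0 s0 t0)" "s0 = 0 \<or> t0 = 0" "Wt a0 s0 t0 = Wt a s t"
    using nf[OF d] by blast
  obtain c' a0' s0' t0' where 2: "c' \<noteq> 0" "cg K (M a' s' t') (const5 c' * M a0' s0' t0')" "s0' = 0 \<or> t0' = 0" "Wt a0' s0' t0' = Wt a' s' t'"
    using nf[OF d] by blast
  have "cmp (M a0 s0 t0) (M a0' s0' t0')" using nf_cmp 1(3,4) 2(3,4) w by simp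
  then show ?thesis using cmp_chain 1(1,2) 2(1,2) by blast
qed

lemma cmp_all: "Wt a s t = Wt a' s' t' \<Longrightarrow> cmp (M a s t) (M a' s' t')"
  using dn_cmp d0_cmp by blast


end

section \<open>Weights and Hilbert points\<close>

lemma ws_diff: "f \<in> weight_space p q m w \<Longrightarrow> g \<in> weight_space p q m w \<Longrightarrow> f - g \<in> weight_space p q m w"
proof -
  assume f: "f \<in> weight_space p q m w" and g: "g \<in> weight_space p q m w"
  have "Poly_Mapping.keys (f - g) \<subseteq> Poly_Mapping.keys f \<union> Poly_Mapping.keys g" by (rule keys_diff)
  then show ?thesis using f g unfolding weight_space_def by blast
qed

lemma ws_mono: "wt p q m a = w \<Longrightarrow> mono a \<in> weight_space p q m w"
  unfolding weight_space_def mono_def by simp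

lemma ws_const: "w = (0, 0) \<Longrightarrow> const5 c \<in> weight_space p q m w"
  unfolding weight_space_def const5_def
  by (cases "c = 0") (auto simp: wt_def)

lemma wt_in_weights: "0 < m \<Longrightarrow> wt p q m a \<in> weights m"
  unfolding weights_def wt_def by simp

lemma hilb_ideal: "hilb_point p q m J \<Longrightarrow> is_ideal5 J" by (simp add: hilb_point_def)
lemma hilb_hyp: "hilb_point p q m J \<Longrightarrow> hyp_eq p q \<in> J" by (simp add: hilb_point_def)
lemma hilb_hom: "hilb_point p q m J \<Longrightarrow> g \<in> J \<Longrightarrow> weight_comp p q m w g \<in> J" unfolding hilb_point_def by blast
lemma hilb_dim: "hilb_point p q m J \<Longrightarrow> w \<in> weights m \<Longrightarrow> \<exists>v\<in>weight_space p q m w. v \<notin> J \<and>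
         (\<forall>u\<in>weight_space p q m w. \<exists>c. u - const5 c * v \<in> J)" by (simp add: hilb_point_def)

lemma onedim:
  assumes H: "hilb_point p q m J" and w: "w \<in> weights m" and x: "x \<in> weight_space p q m w" and y: "y \<in> weight_space p q m w"
    and xn: "x \<notin> J"
  shows "\<exists>al. y - const5 al * x \<in> J"
proof -
  have J: "is_ideal5 J" using H by (rule hilb_ideal)
  obtain v where v: "v \<in> weight_space p q m w" "v \<notin> J" "\<forall>u\<in>weight_space p q m w. \<exists>c. u - const5 c * v \<in> J"
    using hilb_dim[OF H w] by blast
  obtain c1 where c1: "x - const5 c1 * v \<in> J" using v(3) x by blast
  obtain c2 where c2: "y - const5 c2 * v \<in> J" using v(3) y by blast
  have c1n: "c1 \<noteq> 0" using c1 xn by auto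
  have "y - const5 (c2 / c1) * x = (y - const5 c2 * v) - const5 (c2 / c1) * (x - const5 c1 * v)"
    using c1n by (simp add: algebra_simps const5_mult[symmetric])
  also have "\<dots> \<in> J" using c1 c2 J by (simp add: id_diff id_mult)
  finally show ?thesis by blast
qed

lemma one_notin: assumes H: "hilb_point p q m J" and m: "0 < m" shows "1 \<notin> J"
proof
  assume o: "1 \<in> J"
  have "(0, 0) \<in> weights m" using m by (simp add: weights_def)
  then obtain v where "v \<notin> J" using hilb_dim[OF H] by blast
  moreover have "v * 1 \<in> J" using id_mult[OF hilb_ideal[OF H] o] .
  ultimately show False by simp
qed

lemma inv_const:
  assumes H: "hilb_point p q m J" and m: "0 < m" and g: "g \<in> weight_space p q m (0, 0)"
  shows "\<exists>c. g - const5 c \<in> J"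
proof -
  have "(0, 0) \<in> weights m" using m by (simp add: weights_def)
  moreover have "1 \<in> weight_space p q m (0, 0)" using ws_const[of "(0,0)" 1] by simp
  ultimately obtain al where "g - const5 al * 1 \<in> J"
    using onedim[OF H _ _ g one_notin[OF H m]] by blast
  then show ?thesis by auto
qed

lemma inv_K:
  assumes H1: "hilb_point p q m J1" and H2: "hilb_point p q m J2" and m: "0 < m"
    and ga: "gamma p q m J1 = gamma p q m J2" and g: "g \<in> weight_space p q m (0, 0)"
  shows "\<exists>c. cg (J1 \<inter> J2) g (const5 c)"
proof -
  obtain c where c: "g - const5 c \<in> J1" using inv_const[OF H1 m g] by blast
  have "g - const5 c \<in> weight_space p q m (0, 0)" using ws_diff[OF g ws_const] by simp
  then have "g - const5 c \<in> gamma p q m J1" using c by (simp add: gamma_def)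
  then have "g - const5 c \<in> J2" using ga unfolding gamma_def by blast
  then show ?thesis using c unfolding cg_def by blast
qed

lemma all_terms: "is_ideal5 J \<Longrightarrow> (\<And>a. a \<in> Poly_Mapping.keys g \<Longrightarrow> mono a \<in> J) \<Longrightarrow> g \<in> J"
  apply (subst poly_sum)
  apply (rule id_sum, assumption)
  apply (simp add: id_mult)
  done

lemma mono_div: "0 < Poly_Mapping.lookup a i \<Longrightarrow> \<exists>r. mono a = Var i * r"
proof -
  assume h: "0 < Poly_Mapping.lookup a i"
  have "\<And>n. 0 < n \<Longrightarrow> \<exists>r. Var i ^ n = Var i * r" by (metis gr0_conv_Suc power_Suc)
  then obtain r where r: "Var i ^ Poly_Mapping.lookup a i = Var i * r" using h by blast
  show ?thesis
    using five[of i] r mono_decomp[of a] by (auto simp: mult_ac) 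
qed

lemma mono_in: "is_ideal5 J \<Longrightarrow> Var i \<in> J \<Longrightarrow> 0 < Poly_Mapping.lookup a i \<Longrightarrow> mono a \<in> J"
  using mono_div id_mult2 by metis

section \<open>Linear relations from eta\<close>

definition E :: "5 \<Rightarrow> 5 \<Rightarrow> poly5 set \<Rightarrow> (complex \<times> complex) set" where
  "E i j J = {(t0, t1). \<forall>s1 s2. const5 s1 * Var i + const5 s2 * Var j \<in> J \<longrightarrow> t0 * s1 + t1 * s2 = 0}"

lemma eta_neg_E: "eta_neg J = E 1 2 J" by (simp add: eta_neg_def E_def)
lemma eta_pos_E: "eta_pos J = E 3 4 J" by (simp add: eta_pos_def E_def)

lemma E_gen:
  assumes J: "is_ideal5 J"
    and h: "(Var i \<notin> J \<and> (\<exists>al. Var j - const5 al * Var i \<in> J)) \<or> (Var j \<notin> J \<and> (\<exists>al. Var i - const5 al * Var j \<in> J))"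
  shows "(\<exists>t\<in>E i j J. t \<noteq> (0, 0)) \<and> (\<forall>t0 t1. (t0, t1) \<in> E i j J \<longrightarrow> const5 t1 * Var i - const5 t0 * Var j \<in> J)"
  using h
proof
  assume "Var i \<notin> J \<and> (\<exists>al. Var j - const5 al * Var i \<in> J)"
  then obtain al where ni: "Var i \<notin> J" and r: "Var j - const5 al * Var i \<in> J" by blast
  have 1: "(1, al) \<in> E i j J"
    unfolding E_def
  proof (clarsimp)
    fix s1 s2 assume s: "const5 s1 * Var i + const5 s2 * Var j \<in> J"
    have "const5 s1 * Var i + const5 s2 * Var j - const5 s2 * (Var j - const5 al * Var i) = const5 (s1 + al * s2) * Var i"
      by (simp add: algebra_simps const5_mult const5_add)
    moreover have "const5 s1 * Var i + const5 s2 * Var j - const5 s2 * (Var j - const5 al * Var i) \<in> J"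
      using s r J by (simp add: id_diff id_mult)
    ultimately have "const5 (s1 + al * s2) * Var i \<in> J" by simp
    then show "s1 + al * s2 = 0" using id_const_inv[OF J] ni by blast
  qed
  have 2: "const5 t1 * Var i - const5 t0 * Var j \<in> J" if t: "(t0, t1) \<in> E i j J" for t0 t1
  proof -
    have "const5 (- al) * Var i + const5 1 * Var j \<in> J" using r by (simp add: const5_uminus algebra_simps)
    then have "t0 * (- al) + t1 * 1 = 0" using t unfolding E_def by blast
    then have "t1 = al * t0" by (simp add: algebra_simps)
    then have "const5 t1 * Var i - const5 t0 * Var j = - const5 t0 * (Var j - const5 al * Var i)"
      by (simp add: algebra_simps const5_mult)
    also have "\<dots> \<in> J" using r J by (simp add: id_mult id_neg)
    finally show ?thesis .
  qed
  show ?thesis using 1 2 by (auto intro!: bexI[of _ "(1, al)"])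
next
  assume "Var j \<notin> J \<and> (\<exists>al. Var i - const5 al * Var j \<in> J)"
  then obtain al where ni: "Var j \<notin> J" and r: "Var i - const5 al * Var j \<in> J" by blast
  have 1: "(al, 1) \<in> E i j J"
    unfolding E_def
  proof (clarsimp)
    fix s1 s2 assume s: "const5 s1 * Var i + const5 s2 * Var j \<in> J"
    have "const5 s1 * Var i + const5 s2 * Var j - const5 s1 * (Var i - const5 al * Var j) = const5 (al * s1 + s2) * Var j"
      by (simp add: algebra_simps const5_mult const5_add)
    moreover have "const5 s1 * Var i + const5 s2 * Var j - const5 s1 * (Var i - const5 al * Var j) \<in> J"
      using s r J by (simp add: id_diff id_mult)
    ultimately have "const5 (al * s1 + s2) * Var j \<in> J" by simp
    then show "al * s1 + s2 = 0" using id_const_inv[OF J] ni by blast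
  qed
  have 2: "const5 t1 * Var i - const5 t0 * Var j \<in> J" if t: "(t0, t1) \<in> E i j J" for t0 t1
  proof -
    have "const5 1 * Var i + const5 (- al) * Var j \<in> J" using r by (simp add: const5_uminus algebra_simps)
    then have "t0 * 1 + t1 * (- al) = 0" using t unfolding E_def by blast
    then have "t0 = al * t1" by (simp add: algebra_simps)
    then have "const5 t1 * Var i - const5 t0 * Var j = const5 t1 * (Var i - const5 al * Var j)"
      by (simp add: algebra_simps const5_mult)
    also have "\<dots> \<in> J" using r J by (simp add: id_mult)
    finally show ?thesis .
  qed
  show ?thesis using 1 2 by (auto intro!: bexI[of _ "(al, 1)"])
qed

lemma rel_from_t:
  assumes K: "is_ideal5 K" and t: "(t0, t1) \<noteq> (0, 0)" and r: "const5 t1 * Var i - const5 t0 * Var j \<in> K"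
  shows "\<exists>u a1 a2. cg K (Var i) (const5 a1 * u) \<and> cg K (Var j) (const5 a2 * u) \<and> (u = Var i \<or> u = Var j)"
proof (cases "t0 = 0")
  case False
  have "Var j - const5 (t1 / t0) * Var i = - const5 (inverse t0) * (const5 t1 * Var i - const5 t0 * Var j)"
    using False by (simp add: algebra_simps const5_mult[symmetric] divide_inverse)
  also have "\<dots> \<in> K" using r K by (simp add: id_mult id_neg)
  finally have "cg K (Var j) (const5 (t1 / t0) * Var i)" unfolding cg_def .
  moreover have "cg K (Var i) (const5 1 * Var i)" using cg_refl[OF K] by simp
  ultimately show ?thesis by blast
next
  case True
  then have t1: "t1 \<noteq> 0" using t by simp
  have "const5 t1 * Var i \<in> K" using r True by simp
  then have "Var i \<in> K" using id_const_inv[OF K] t1 by blast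
  then have "cg K (Var i) (const5 0 * Var j)" unfolding cg_def by simp
  moreover have "cg K (Var j) (const5 1 * Var j)" using cg_refl[OF K] by simp
  ultimately show ?thesis by blast
qed



lemma wt_single1: "wt p q m (Poly_Mapping.single (1::5) 1) = (- int p, (-1) mod int m)"
  by (simp add: wt_def lookup_single)
lemma wt_single2: "wt p q m (Poly_Mapping.single (2::5) 1) = (- int p, (-1) mod int m)"
  by (simp add: wt_def lookup_single)
lemma wt_single3: "wt p q m (Poly_Mapping.single (3::5) 1) = (int q, 1 mod int m)"
  by (simp add: wt_def lookup_single)
lemma wt_single4: "wt p q m (Poly_Mapping.single (4::5) 1) = (int q, 1 mod int m)"
  by (simp add: wt_def lookup_single)

lemma Var_mono: "Var i = mono (Poly_Mapping.single i 1)" by (simp add: Var_def mono_def)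

lemma lin_neg:
  assumes H: "hilb_point p q m J" and p: "0 < p" and m: "0 < m"
  shows "(Var 1 \<notin> J \<and> (\<exists>al. Var 2 - const5 al * Var 1 \<in> J)) \<or> (Var 2 \<notin> J \<and> (\<exists>al. Var 1 - const5 al * Var 2 \<in> J))"
proof -
  have J: "is_ideal5 J" using H by (rule hilb_ideal)
  define w where "w = (- int p, (-1) mod int m)"
  have w: "w \<in> weights m" using m by (simp add: w_def weights_def)
  have x1: "Var 1 \<in> weight_space p q m w" unfolding Var_mono w_def using ws_mono wt_single1 by metis
  have x2: "Var 2 \<in> weight_space p q m w" unfolding Var_mono w_def using ws_mono wt_single2 by metis
  have nb: "\<not> (Var 1 \<in> J \<and> Var 2 \<in> J)"
  proof
    assume b: "Var 1 \<in> J \<and> Var 2 \<in> J"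
    obtain v where v: "v \<in> weight_space p q m w" "v \<notin> J" using hilb_dim[OF H w] by blast
    have "v \<in> J"
    proof (rule all_terms[OF J])
      fix a assume a: "a \<in> Poly_Mapping.keys v"
      then have wa: "wt p q m a = w" using v(1) unfolding weight_space_def by blast
      have "0 < Poly_Mapping.lookup a 1 \<or> 0 < Poly_Mapping.lookup a 2"
      proof (rule ccontr)
        assume "\<not> ?thesis"
        then have "Poly_Mapping.lookup a 1 = 0" "Poly_Mapping.lookup a 2 = 0" by auto
        then have "int (Poly_Mapping.lookup a 0) + int q * int (Poly_Mapping.lookup a 3 + Poly_Mapping.lookup a 4) = - int p"
          using wa unfolding wt_def w_def by simp
        moreover have "0 \<le> int q * int (Poly_Mapping.lookup a 3 + Poly_Mapping.lookup a 4)" by simp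
        ultimately show False using p by linarith
      qed
      then show "mono a \<in> J" using mono_in[OF J] b by blast
    qed
    then show False using v(2) by blast
  qed
  show ?thesis
  proof (cases "Var 1 \<in> J")
    case False
    then show ?thesis using onedim[OF H w x1 x2] by blast
  next
    case True
    then have "Var 2 \<notin> J" using nb by blast
    then show ?thesis using onedim[OF H w x2 x1] by blast
  qed
qed

lemma lin_pos:
  assumes H: "hilb_point p q m J" and m: "0 < m"
  shows "(Var 3 \<notin> J \<and> (\<exists>al. Var 4 - const5 al * Var 3 \<in> J)) \<or> (Var 4 \<notin> J \<and> (\<exists>al. Var 3 - const5 al * Var 4 \<in> J))"
proof -
  have J: "is_ideal5 J" using H by (rule hilb_ideal)
  define w where "w = (int q, 1 mod int m)"
  have w: "w \<in> weights m" using m by (simp add: w_def weights_def)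
  have x1: "Var 3 \<in> weight_space p q m w" unfolding Var_mono w_def using ws_mono wt_single3 by metis
  have x2: "Var 4 \<in> weight_space p q m w" unfolding Var_mono w_def using ws_mono wt_single4 by metis
  have nb: "\<not> (Var 3 \<in> J \<and> Var 4 \<in> J)"
  proof
    assume b: "Var 3 \<in> J \<and> Var 4 \<in> J"
    have "Var 1 * Var 4 - Var 2 * Var 3 \<in> J" using b J by (simp add: id_diff id_mult)
    then have z: "Var 0 ^ (q - p) \<in> J"
      using hilb_hyp[OF H] J id_add unfolding hyp_eq_def by fastforce
    obtain v where v: "v \<in> weight_space p q m w" "v \<notin> J" using hilb_dim[OF H w] by blast
    have "v \<in> J"
    proof (rule all_terms[OF J])
      fix a assume a: "a \<in> Poly_Mapping.keys v"
      then have wa: "wt p q m a = w" using v(1) unfolding weight_space_def by blast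
      show "mono a \<in> J"
      proof (cases "0 < Poly_Mapping.lookup a 3 \<or> 0 < Poly_Mapping.lookup a 4")
        case True
        then show ?thesis using mono_in[OF J] b by blast
      next
        case False
        then have "Poly_Mapping.lookup a 3 = 0" "Poly_Mapping.lookup a 4 = 0" by auto
        then have "int (Poly_Mapping.lookup a 0) = int q + int p * int (Poly_Mapping.lookup a 1 + Poly_Mapping.lookup a 2)"
          using wa unfolding wt_def w_def by simp
        moreover have "0 \<le> int p * int (Poly_Mapping.lookup a 1 + Poly_Mapping.lookup a 2)" by simp
        ultimately have le: "q - p \<le> Poly_Mapping.lookup a 0" by linarith
        have "Var 0 ^ Poly_Mapping.lookup a 0 = Var 0 ^ (q - p) * Var 0 ^ (Poly_Mapping.lookup a 0 - (q - p))"
          using le by (simp add: power_add[symmetric])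
        then have "mono a = Var 0 ^ (q - p) * (Var 0 ^ (Poly_Mapping.lookup a 0 - (q - p)) * Var 1 ^ Poly_Mapping.lookup a 1 *
           Var 2 ^ Poly_Mapping.lookup a 2 * Var 3 ^ Poly_Mapping.lookup a 3 * Var 4 ^ Poly_Mapping.lookup a 4)"
          using mono_decomp[of a] by (simp add: mult_ac)
        then show ?thesis using z J id_mult2 by metis
      qed
    qed
    then show False using v(2) by blast
  qed
  show ?thesis
  proof (cases "Var 3 \<in> J")
    case False
    then show ?thesis using onedim[OF H w x1 x2] by blast
  next
    case True
    then have "Var 4 \<notin> J" using nb by blast
    then show ?thesis using onedim[OF H w x2 x1] by blast
  qed
qed


lemma wc_lookup: "Poly_Mapping.lookup (weight_comp p q m w g) a = (if wt p q m a = w then Poly_Mapping.lookup g a else 0)"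
  unfolding weight_comp_def lookup_mapp by (auto simp: when_def in_keys_iff)

lemma wc_ws: "weight_comp p q m w g \<in> weight_space p q m w"
  unfolding weight_space_def by (auto simp: in_keys_iff wc_lookup split: if_splits)

lemma wc_sum: "g = (\<Sum>w\<in>wt p q m ` Poly_Mapping.keys g. weight_comp p q m w g)"
proof (rule poly_mapping_eqI)
  fix x
  have "Poly_Mapping.lookup (\<Sum>w\<in>wt p q m ` Poly_Mapping.keys g. weight_comp p q m w g) x
      = (\<Sum>w\<in>wt p q m ` Poly_Mapping.keys g. (if wt p q m x = w then Poly_Mapping.lookup g x else 0))"
    by (simp add: lookup_sum wc_lookup)
  also have "\<dots> = (if wt p q m x \<in> wt p q m ` Poly_Mapping.keys g then Poly_Mapping.lookup g x else 0)"
    by (simp add: sum.delta)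
  also have "\<dots> = Poly_Mapping.lookup g x"
    by (auto simp: in_keys_iff)
  finally show "Poly_Mapping.lookup g x = Poly_Mapping.lookup (\<Sum>w\<in>wt p q m ` Poly_Mapping.keys g. weight_comp p q m w g) x" by simp
qed

section \<open>Reduction of monomials\<close>

lemma cpow': "(const5 c * x)^r = const5 (c^r) * x^r"
  by (simp add: power_mult_distrib const5_pow)

lemma cg_diff: "is_ideal5 K \<Longrightarrow> cg K f g \<Longrightarrow> cg K f' g' \<Longrightarrow> cg K (f - f') (g - g')"
  unfolding cg_def using id_diff by (fastforce simp: algebra_simps)

lemma red:
  assumes K: "is_ideal5 K" and r1: "cg K (Var 1) (const5 a1 * u)" and r2: "cg K (Var 2) (const5 a2 * u)"
    and r3: "cg K (Var 3) (const5 b3 * v)" and r4: "cg K (Var 4) (const5 b4 * v)"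
  shows "cg K (mono a) (const5 (a1 ^ Poly_Mapping.lookup a 1 * a2 ^ Poly_Mapping.lookup a 2 * b3 ^ Poly_Mapping.lookup a 3 * b4 ^ Poly_Mapping.lookup a 4)
     * (Var 0 ^ Poly_Mapping.lookup a 0 * u ^ (Poly_Mapping.lookup a 1 + Poly_Mapping.lookup a 2) * v ^ (Poly_Mapping.lookup a 3 + Poly_Mapping.lookup a 4)))"
proof -
  let ?e0 = "Poly_Mapping.lookup a 0" and ?e1 = "Poly_Mapping.lookup a 1" and ?e2 = "Poly_Mapping.lookup a 2"
    and ?e3 = "Poly_Mapping.lookup a 3" and ?e4 = "Poly_Mapping.lookup a 4"
  have "cg K (Var 0 ^ ?e0 * Var 1 ^ ?e1 * Var 2 ^ ?e2 * Var 3 ^ ?e3 * Var 4 ^ ?e4)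
     (Var 0 ^ ?e0 * (const5 a1 * u) ^ ?e1 * (const5 a2 * u) ^ ?e2 * (const5 b3 * v) ^ ?e3 * (const5 b4 * v) ^ ?e4)"
    by (intro cg_mult[OF K] cg_pow[OF K] cg_refl[OF K] r1 r2 r3 r4)
  moreover have "Var 0 ^ ?e0 * (const5 a1 * u) ^ ?e1 * (const5 a2 * u) ^ ?e2 * (const5 b3 * v) ^ ?e3 * (const5 b4 * v) ^ ?e4
    = const5 (a1 ^ ?e1 * a2 ^ ?e2 * b3 ^ ?e3 * b4 ^ ?e4) * (Var 0 ^ ?e0 * u ^ (?e1 + ?e2) * v ^ (?e3 + ?e4))"
    unfolding cpow' const5_mult power_add by (simp only: mult_ac)
  ultimately show ?thesis using mono_decomp[of a] by simp
qed

lemma reduce_to_b: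
  assumes K: "is_ideal5 K" and X: "cg K X (const5 c1 * N1)" and Y: "cg K Y (const5 c2 * N2)"
    and N: "(\<exists>d. cg K N1 (const5 d * N2)) \<or> (\<exists>d. cg K N2 (const5 d * N1))" and Yn: "Y \<notin> K"
  shows "\<exists>c. cg K X (const5 c * Y)"
  using N
proof
  assume "\<exists>d. cg K N1 (const5 d * N2)"
  then obtain d where d: "cg K N1 (const5 d * N2)" by blast
  have c2: "c2 \<noteq> 0" using Y Yn unfolding cg_def by auto
  have "cg K X (const5 (c1 * d * inverse c2) * Y)"
    using cg_chain[OF K cg_chain[OF K X d] cg_inv[OF K Y c2]] .
  then show ?thesis by blast
next
  assume "\<exists>d. cg K N2 (const5 d * N1)"
  then obtain d where d: "cg K N2 (const5 d * N1)" by blast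
  have Y2: "cg K Y (const5 (c2 * d) * N1)" using cg_chain[OF K Y d] .
  have c2: "c2 * d \<noteq> 0" using Y2 Yn unfolding cg_def by auto
  have "cg K X (const5 (c1 * inverse (c2 * d)) * Y)"
    using cg_chain[OF K X cg_inv[OF K Y2 c2]] .
  then show ?thesis by blast
qed

lemma wt_three:
  assumes i: "i = 1 \<or> i = 2" and j: "j = 3 \<or> j = 4"
  shows "wt p q m (Poly_Mapping.single 0 x + Poly_Mapping.single i y + Poly_Mapping.single j w)
     = (int x - int p * int y + int q * int w, (int w - int y) mod int m)"
  using i j by (auto simp: wt_def lookup_add lookup_single)

lemma three_mono: "Var 0 ^ x * Var i ^ y * Var j ^ w = mono (Poly_Mapping.single 0 x + Poly_Mapping.single i y + Poly_Mapping.single j w)"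
  by (simp add: Var_pow mono_add)


lemma const5_sum: "const5 (sum f A) = (\<Sum>a\<in>A. const5 (f a))"
  by (induct A rule: infinite_finite_induct) (simp_all add: const5_add)

lemma sub:
  fixes p q m :: nat
  assumes p: "0 < p" and pq: "p \<le> q" and cop: "coprime p q" and m: "0 < m"
    and toric: "(q - p) dvd m"
    and H1: "hilb_point p q m J1" and H2: "hilb_point p q m J2"
    and ga: "gamma p q m J1 = gamma p q m J2"
    and en: "eta_neg J1 = eta_neg J2"
    and ep: "eta_pos J1 = eta_pos J2"
  shows "J1 \<subseteq> J2"
proof -
  define K where "K = J1 \<inter> J2"
  have I1: "is_ideal5 J1" using H1 by (rule hilb_ideal)
  have I2: "is_ideal5 J2" using H2 by (rule hilb_ideal)
  have K: "is_ideal5 K" unfolding K_def using I1 I2 by (rule id_inter)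
  have KJ: "K \<subseteq> J1" "K \<subseteq> J2" unfolding K_def by auto
  have kpos: "0 < q - p"
  proof (rule ccontr)
    assume "\<not> 0 < q - p"
    then have "q - p = 0" by simp
    then show False using toric m by simp
  qed
  obtain t0 t1 where t: "(t0, t1) \<in> E 1 2 J1" "(t0, t1) \<noteq> (0, 0)"
    using E_gen[OF I1 lin_neg[OF H1 p m]] by auto
  have t2: "(t0, t1) \<in> E 1 2 J2" using t(1) en by (simp add: eta_neg_E)
  have "const5 t1 * Var 1 - const5 t0 * Var 2 \<in> J1"
    using E_gen[OF I1 lin_neg[OF H1 p m]] t(1) by blast
  moreover have "const5 t1 * Var 1 - const5 t0 * Var 2 \<in> J2"
    using E_gen[OF I2 lin_neg[OF H2 p m]] t2 by blast
  ultimately have "const5 t1 * Var 1 - const5 t0 * Var 2 \<in> K" unfolding K_def by blast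
  then obtain u a1 a2 where r1: "cg K (Var 1) (const5 a1 * u)" and r2: "cg K (Var 2) (const5 a2 * u)"
    and ui: "u = Var 1 \<or> u = Var 2"
    using rel_from_t[OF K t(2)] by blast
  obtain s0 s1 where s: "(s0, s1) \<in> E 3 4 J1" "(s0, s1) \<noteq> (0, 0)"
    using E_gen[OF I1 lin_pos[OF H1 m]] by auto
  have s2: "(s0, s1) \<in> E 3 4 J2" using s(1) ep by (simp add: eta_pos_E)
  have "const5 s1 * Var 3 - const5 s0 * Var 4 \<in> J1"
    using E_gen[OF I1 lin_pos[OF H1 m]] s(1) by blast
  moreover have "const5 s1 * Var 3 - const5 s0 * Var 4 \<in> J2"
    using E_gen[OF I2 lin_pos[OF H2 m]] s2 by blast
  ultimately have "const5 s1 * Var 3 - const5 s0 * Var 4 \<in> K" unfolding K_def by blast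
  then obtain v b3 b4 where r3: "cg K (Var 3) (const5 b3 * v)" and r4: "cg K (Var 4) (const5 b4 * v)"
    and vj: "v = Var 3 \<or> v = Var 4"
    using rel_from_t[OF K s(2)] by blast
  obtain i where i: "i = 1 \<or> i = 2" "u = Var i" using ui by blast
  obtain j where j: "j = 3 \<or> j = 4" "v = Var j" using vj by blast
  define de where "de = a1 * b4 - a2 * b3"
  have hK: "hyp_eq p q \<in> K" unfolding K_def using hilb_hyp[OF H1] hilb_hyp[OF H2] by blast
  have c1: "cg K (Var 0 ^ (q - p)) (Var 1 * Var 4 - Var 2 * Var 3)"
    using hK unfolding cg_def hyp_eq_def .
  have c2: "cg K (Var 1 * Var 4 - Var 2 * Var 3) ((const5 a1 * u) * (const5 b4 * v) - (const5 a2 * u) * (const5 b3 * v))"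
    by (intro cg_diff[OF K] cg_mult[OF K] r1 r2 r3 r4)
  have e3: "(const5 a1 * u) * (const5 b4 * v) - (const5 a2 * u) * (const5 b3 * v) = const5 de * (u * v)"
    unfolding de_def const5_diff const5_mult by (simp add: algebra_simps)
  have rel: "cg K (Var 0 ^ (q - p)) (const5 de * (u * v))"
    using cg_trans[OF K c1 c2] unfolding e3 .
  have Uw: "Var 0 ^ (p * m) * u ^ m \<in> weight_space p q m (0, 0)"
  proof -
    have "Var 0 ^ (p * m) * u ^ m = mono (Poly_Mapping.single 0 (p*m) + Poly_Mapping.single i m + Poly_Mapping.single j 0)"
      using three_mono[of "p*m" i m j 0] i(2) by simp
    moreover have "wt p q m (Poly_Mapping.single 0 (p*m) + Poly_Mapping.single i m + Poly_Mapping.single j 0) = (0, 0)"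
      using wt_three[OF i(1) j(1), of p q m "p*m" m 0] by simp
    ultimately show ?thesis using ws_mono by metis
  qed
  obtain la where relU: "cg K (Var 0 ^ (p * m) * u ^ m) (const5 la)"
    using inv_K[OF H1 H2 m ga Uw] unfolding K_def by blast
  define n where "n = m div (q - p)"
  have kn: "(q - p) * n = m" using toric n_def by simp
  have Vw: "u ^ (q * n) * v ^ (p * n) \<in> weight_space p q m (0, 0)"
  proof -
    have "u ^ (q * n) * v ^ (p * n) = mono (Poly_Mapping.single 0 0 + Poly_Mapping.single i (q*n) + Poly_Mapping.single j (p*n))"
      using three_mono[of 0 i "q*n" j "p*n"] i(2) j(2) by simp
    moreover have "wt p q m (Poly_Mapping.single 0 0 + Poly_Mapping.single i (q*n) + Poly_Mapping.single j (p*n)) = (0, 0)"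
    proof -
      have "int m = (int q - int p) * int n" using kn pq by (metis of_nat_diff of_nat_mult)
      then have "int (p * n) - int (q * n) = - int m"
        by (simp add: algebra_simps)
      then show ?thesis using wt_three[OF i(1) j(1), of p q m 0 "q*n" "p*n"] by simp
    qed
    ultimately show ?thesis using ws_mono by metis
  qed
  obtain mu where relV: "cg K (u ^ (q * n) * v ^ (p * n)) (const5 mu)"
    using inv_K[OF H1 H2 m ga Vw] unfolding K_def by blast
  interpret C: cmpl K "Var 0" u v de la mu p q m "q - p"
    by unfold_locales (use K kpos pq toric m cop rel relU relV n_def in auto)
  show "J1 \<subseteq> J2"
  proof
    fix g assume g: "g \<in> J1"
    have "(\<Sum>w\<in>wt p q m ` Poly_Mapping.keys g. weight_comp p q m w g) \<in> J2"
    proof (rule id_sum[OF I2])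
      fix w assume w: "w \<in> wt p q m ` Poly_Mapping.keys g"
      define gw where "gw = weight_comp p q m w g"
      have gw1: "gw \<in> J1" unfolding gw_def using hilb_hom[OF H1 g] .
      have gws: "gw \<in> weight_space p q m w" unfolding gw_def by (rule wc_ws)
      have wW: "w \<in> weights m" using w wt_in_weights[OF m] by blast
      obtain v0 where v0: "v0 \<in> weight_space p q m w" "v0 \<notin> J1" using hilb_dim[OF H1 wW] by blast
      obtain b where b: "b \<in> Poly_Mapping.keys v0" "mono b \<notin> J1" using all_terms[OF I1, of v0] v0(2) by blast
      have wb: "wt p q m b = w" using b(1) v0(1) unfolding weight_space_def by blast
      have bK: "mono b \<notin> K" using b(2) KJ by blast
      have each: "\<exists>c. cg K (mono a) (const5 c * mono b)" if a: "a \<in> Poly_Mapping.keys gw" for a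
      proof -
        have wa: "wt p q m a = w" using a gws unfolding weight_space_def by blast
        have Weq: "C.Wt (Poly_Mapping.lookup a 0) (Poly_Mapping.lookup a 1 + Poly_Mapping.lookup a 2) (Poly_Mapping.lookup a 3 + Poly_Mapping.lookup a 4)
          = C.Wt (Poly_Mapping.lookup b 0) (Poly_Mapping.lookup b 1 + Poly_Mapping.lookup b 2) (Poly_Mapping.lookup b 3 + Poly_Mapping.lookup b 4)"
          using wa wb unfolding C.Wt_def wt_def by simp
        note cm = C.cmp_all[OF Weq]
        show ?thesis
          by (rule reduce_to_b[OF K red[OF K r1 r2 r3 r4, of a] red[OF K r1 r2 r3 r4, of b] _ bK])
             (use cm in \<open>simp add: C.cmp_def C.M_def\<close>)
      qed
      then obtain cf where cf: "\<And>a. a \<in> Poly_Mapping.keys gw \<Longrightarrow> cg K (mono a) (const5 (cf a) * mono b)"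
        by metis
      define S where "S = (\<Sum>a\<in>Poly_Mapping.keys gw. Poly_Mapping.lookup gw a * cf a)"
      have "gw - const5 S * mono b = (\<Sum>a\<in>Poly_Mapping.keys gw. const5 (Poly_Mapping.lookup gw a) * (mono a - const5 (cf a) * mono b))"
      proof -
        have "const5 S * mono b = (\<Sum>a\<in>Poly_Mapping.keys gw. const5 (Poly_Mapping.lookup gw a) * (const5 (cf a) * mono b))"
          unfolding S_def const5_sum sum_distrib_right by (simp add: const5_mult mult.assoc)
        moreover have "gw = (\<Sum>a\<in>Poly_Mapping.keys gw. const5 (Poly_Mapping.lookup gw a) * mono a)"
          by (rule poly_sum)
        ultimately show ?thesis
          by (simp add: right_diff_distrib sum_subtractf)
      qed
      also have "\<dots> \<in> K"
        using cf by (intro id_sum[OF K] id_mult[OF K]) (simp add: cg_def)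
      finally have d: "gw - const5 S * mono b \<in> K" .
      have "const5 S * mono b = gw - (gw - const5 S * mono b)" by simp
      also have "\<dots> \<in> J1" using gw1 d KJ(1) id_diff[OF I1] by blast
      finally have "const5 S * mono b \<in> J1" .
      then have "S = 0" using id_const_inv[OF I1] b(2) by blast
      then have "gw \<in> K" using d by simp
      then show "weight_comp p q m w g \<in> J2" using KJ(2) unfolding gw_def by blast
    qed
    then show "g \<in> J2" using wc_sum[of g p q m] by simp
  qed
qed

theorem lemma6p3:
  fixes p q m :: nat
  assumes "0 < p" and "p \<le> q" and "coprime p q" and "0 < m"
    and toric: "(q - p) dvd m"
    and H1: "hilb_point p q m J1" and H2: "hilb_point p q m J2"
    and "gamma p q m J1 = gamma p q m J2"
    and "eta_neg J1 = eta_neg J2"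
    and "eta_pos J1 = eta_pos J2"
  shows "J1 = J2"
proof
  show "J1 \<subseteq> J2" using sub[OF assms] .
  show "J2 \<subseteq> J1" using sub[OF assms(1-5) H2 H1 assms(8-10)[symmetric]] .
qed


end
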